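(* Let $r\geq 1$, let $\mathbf a=(a_1,\ldots,a_r)$ be positive integers, let $D\ge1$ be a common multiple of $a_1,\ldots,a_r$, and let $d_{\mathbf a,m}$ ($0\le m\le r-1$) be the $D$-periodic functions with $p_{\mathbf a}(n)=\sum_{m=0}^{r-1}d_{\mathbf a,m}(n)n^m$ for all $n\ge 0$. Let $\alpha_1<\cdots<\alpha_{rD}$ be integers with $\alpha_1\ge 2$, and let $\Delta$ be the determinant of the $rD\times rD$ matrix whose entry in row $j$ ($1\le j\le rD$) and column $mD+v$ ($0\le m\le r-1$, $1\le v\le D$) is $\dfrac{D^{\alpha_j+m}B_{\alpha_j+m}(v/D)}{\alpha_j+m}$. For $0\le m\le r-1$, $1\le v\le D$, let $\Delta^{m,v}$ be the determinant obtained from this matrix by replacing its $(mD+v)$-th column by the column with entries $\dfrac{(-1)^{r-1}(\alpha_j-1)!\,D}{(\alpha_j+r-1)!}B_{\alpha_j+r-1}(\mathbf a)$, $1\le j\le rD$. If $\Delta\neq 0$, then $d_{\mathbf a,m}(v)=\Delta^{m,v}/\Delta$ for all $1\le v\le D$, $0\le m\le r-1$, and moreover for every $n\in\mathbb N$, $$p_{\mathbf a}(n)=\frac{1}{\Delta}\sum_{m=0}^{r-1}\Delta^{m,v}n^m,$$ where $v\in\{1,\ldots,D\}$ is such that $v\equiv n \pmod D$.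
   Context: $p_{\mathbf a}(n)$ is the number of integer solutions $(x_1,\ldots,x_r)$ of $\sum_{i=1}^r a_ix_i=n$ with all $x_i\ge 0$; it is known that there are unique functions $d_{\mathbf a,m}:\mathbb Z_{\ge0}\to\mathbb Q$ with $d_{\mathbf a,m}(n+D)=d_{\mathbf a,m}(n)$ and $p_{\mathbf a}(n)=\sum_{m=0}^{r-1}d_{\mathbf a,m}(n)n^m$ for all $n\ge 0$ (so $d_{\mathbf a,m}(D)=d_{\mathbf a,m}(0)$). $B_n(x)$ is the Bernoulli polynomial, $\frac{ze^{xz}}{e^z-1}=\sum_{n\ge0}B_n(x)\frac{z^n}{n!}$. The Bernoulli–Barnes numbers $B_j(\mathbf a)$ are defined by $\frac{z^r}{(e^{a_1z}-1)\cdots(e^{a_rz}-1)}=\sum_{j\ge0}B_j(\mathbf a)\frac{z^j}{j!}$. *)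

theory Defs
  imports "HOL-Computational_Algebra.Formal_Power_Series" "Jordan_Normal_Form.Determinant"
begin

definition bernpoly :: "nat \<Rightarrow> real \<Rightarrow> real" where
  "bernpoly n x = fact n * fps_nth (fps_X * fps_exp x / (fps_exp 1 - 1)) n"

definition barnes :: "nat \<Rightarrow> nat list \<Rightarrow> real" where
  "barnes j a = fact j *
     fps_nth (fps_X ^ length a / (\<Prod>i<length a. (fps_exp (real (a ! i)) - 1))) j"

definition part_count :: "nat list \<Rightarrow> nat \<Rightarrow> nat" where
  "part_count a n = card {x :: nat list. length x = length a \<and> (\<Sum>i<length a. a ! i * x ! i) = n}"

text \<open>The rD x rD matrix (0-based: row i is row j = i+1, column c = m D + v - 1).\<close>
definition coeff_mat :: "nat \<Rightarrow> nat \<Rightarrow> (nat \<Rightarrow> nat) \<Rightarrow> real mat" where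
  "coeff_mat r D alpha = mat (r * D) (r * D) (\<lambda>(i, c).
      let j = i + 1; m = c div D; v = c mod D + 1 in
      real D ^ (alpha j + m) * bernpoly (alpha j + m) (real v / real D) / real (alpha j + m))"

definition repl_mat :: "nat list \<Rightarrow> nat \<Rightarrow> (nat \<Rightarrow> nat) \<Rightarrow> nat \<Rightarrow> nat \<Rightarrow> real mat" where
  "repl_mat a D alpha m v = (let r = length a in mat (r * D) (r * D) (\<lambda>(i, c).
      if c = m * D + v - 1 then
        (let j = i + 1 in
         (-1) ^ (r - 1) * fact (alpha j - 1) * real D / fact (alpha j + r - 1)
           * barnes (alpha j + r - 1) a)
      else coeff_mat r D alpha $$ (i, c)))"

end

theory Submission
  imports Defs "HOL-Computational_Algebra.Polynomial_FPS"
begin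

no_notation vec_index (infixl \<open>$\<close> 100)
unbundle fps_syntax

definition pcS :: "nat list \<Rightarrow> nat \<Rightarrow> nat list set" where
  "pcS a n = {x :: nat list. length x = length a \<and> (\<Sum>i<length a. a ! i * x ! i) = n}"

lemma part_count_pcS: "part_count a n = card (pcS a n)"
  unfolding part_count_def pcS_def ..

lemma sum_cons: "(\<Sum>i<Suc (length a). (b#a) ! i * (y#ys) ! i) = b * y + (\<Sum>i<length a. a ! i * ys ! i)"
  by (simp only: sum.lessThan_Suc_shift) simp

lemma pcS_finite:
  assumes "\<forall>i<length a. a ! i > 0"
  shows "finite (pcS a n)"
proof -
  have "pcS a n \<subseteq> {x. set x \<subseteq> {0..n} \<and> length x = length a}"
  proof
    fix x assume x: "x \<in> pcS a n"
    have "x ! i \<le> n" if "i < length x" for i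
    proof -
      have "a ! i > 0" using assms that x by (auto simp: pcS_def)
      then have "x ! i \<le> a ! i * x ! i" by simp
      also have "\<dots> \<le> (\<Sum>i<length a. a ! i * x ! i)"
        using that x by (intro member_le_sum) (auto simp: pcS_def)
      finally show ?thesis using x by (simp add: pcS_def)
    qed
    then show "x \<in> {x. set x \<subseteq> {0..n} \<and> length x = length a}"
      using x by (auto simp: pcS_def in_set_conv_nth)
  qed
  moreover have "finite {x. set x \<subseteq> {0..n} \<and> length x = length a}"
    by (rule finite_lists_length_eq) simp
  ultimately show ?thesis by (rule finite_subset)
qed

lemma pcS_cons_eq:
  "pcS (b#a) n = Cons 0 ` pcS a n \<union>
     (if b \<le> n then (\<lambda>x. Suc (hd x) # tl x) ` pcS (b#a) (n - b) else {})"
proof (intro equalityI subsetI)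
  fix x assume x: "x \<in> pcS (b#a) n"
  then obtain y ys where xy: "x = y # ys" by (cases x) (auto simp: pcS_def)
  show "x \<in> Cons 0 ` pcS a n \<union>
     (if b \<le> n then (\<lambda>x. Suc (hd x) # tl x) ` pcS (b#a) (n - b) else {})"
  proof (cases y)
    case 0
    then have "ys \<in> pcS a n" using x xy by (simp add: pcS_def sum_cons del: sum.lessThan_Suc)
    then show ?thesis using xy 0 by auto
  next
    case (Suc z)
    have e: "b * y + (\<Sum>i<length a. a ! i * ys ! i) = n" "length ys = length a"
      using x xy by (simp_all add: pcS_def sum_cons del: sum.lessThan_Suc)
    have "b \<le> b * y" using Suc by simp
    then have "b \<le> n" using e(1) by linarith
    moreover have "z # ys \<in> pcS (b#a) (n - b)"
      using e Suc by (simp add: pcS_def sum_cons del: sum.lessThan_Suc)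
    ultimately show ?thesis using xy Suc by (auto intro!: image_eqI[where x="z#ys"])
  qed
next
  fix x assume "x \<in> Cons 0 ` pcS a n \<union>
     (if b \<le> n then (\<lambda>x. Suc (hd x) # tl x) ` pcS (b#a) (n - b) else {})"
  then consider (A) ys where "ys \<in> pcS a n" "x = 0 # ys"
    | (B) w where "b \<le> n" "w \<in> pcS (b#a) (n - b)" "x = Suc (hd w) # tl w"
    by (auto split: if_splits)
  then show "x \<in> pcS (b#a) n"
  proof cases
    case A then show ?thesis by (simp add: pcS_def sum_cons del: sum.lessThan_Suc)
  next
    case B
    then obtain y ys where w: "w = y # ys" by (cases w) (auto simp: pcS_def)
    have e: "b * y + (\<Sum>i<length a. a ! i * ys ! i) = n - b" "length ys = length a"
      using B w by (simp_all add: pcS_def sum_cons del: sum.lessThan_Suc)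
    have "b * Suc y + (\<Sum>i<length a. a ! i * ys ! i) = n" using e B(1) by simp
    then show ?thesis using B w e(2) by (simp add: pcS_def sum_cons del: sum.lessThan_Suc mult_Suc_right)
  qed
qed

lemma pc_rec:
  assumes "\<forall>i<length (b#a). (b#a) ! i > 0"
  shows "part_count (b#a) n = part_count a n + (if b \<le> n then part_count (b#a) (n - b) else 0)"
proof -
  have fa: "finite (pcS a n)" using assms by (intro pcS_finite) auto
  have fb: "finite (pcS (b#a) (n-b))" using assms by (intro pcS_finite) auto
  have inj1: "inj_on (Cons 0) (pcS a n)" by (auto intro: inj_onI)
  have inj2: "inj_on (\<lambda>x. Suc (hd x) # tl x) (pcS (b#a) (n-b))"
  proof (intro inj_onI)
    fix x y assume "x \<in> pcS (b#a) (n-b)" "y \<in> pcS (b#a) (n-b)" "Suc (hd x) # tl x = Suc (hd y) # tl y"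
    then show "x = y" by (cases x; cases y) (auto simp: pcS_def)
  qed
  have disj: "Cons 0 ` pcS a n \<inter> (\<lambda>x. Suc (hd x) # tl x) ` pcS (b#a) (n-b) = {}" by auto
  show ?thesis
    unfolding part_count_pcS pcS_cons_eq[of b a n]
    using fa fb inj1 inj2 disj
    by (auto simp: card_Un_disjoint card_image)
qed


definition Fa :: "nat list \<Rightarrow> real fps" where
  "Fa a = Abs_fps (\<lambda>n. real (part_count a n))"

definition Pa :: "nat list \<Rightarrow> real fps" where
  "Pa a = (\<Prod>i<length a. 1 - fps_X ^ (a ! i))"

lemma part_count_Nil: "part_count [] n = (if n = 0 then 1 else 0)"
proof -
  have "{x :: nat list. length x = 0 \<and> 0 = n} = (if n = 0 then {[]} else {})" by auto
  then show ?thesis by (simp add: part_count_def)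
qed

lemma Fa_Pa: "\<forall>i<length a. a ! i > 0 \<Longrightarrow> Fa a * Pa a = 1"
proof (induction a)
  case Nil
  have "Fa [] = 1" by (intro fps_ext) (simp add: Fa_def part_count_Nil)
  then show ?case by (simp add: Pa_def)
next
  case (Cons b a)
  have pos: "\<forall>i<length a. a ! i > 0" using Cons.prems by auto
  have "Pa (b#a) = (1 - fps_X ^ b) * Pa a"
    by (simp add: Pa_def prod.lessThan_Suc_shift del: prod.lessThan_Suc)
  moreover have "Fa (b#a) * (1 - fps_X ^ b) = Fa a"
  proof (intro fps_ext)
    fix n
    have "(Fa (b#a) * (1 - fps_X ^ b)) $ n = Fa (b#a) $ n - (fps_X ^ b * Fa (b#a)) $ n"
      by (simp add: algebra_simps)
    also have "\<dots> = Fa a $ n"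
      unfolding fps_X_power_mult_nth using pc_rec[OF Cons.prems, of n]
      by (auto simp: Fa_def)
    finally show "(Fa (b#a) * (1 - fps_X ^ b)) $ n = Fa a $ n" .
  qed
  ultimately show ?case using Cons.IH[OF pos] by (simp add: mult.assoc[symmetric])
qed

definition th :: "real fps \<Rightarrow> real fps" where
  "th f = fps_X * fps_deriv f"

lemma th_nth: "th f $ n = real n * f $ n"
  by (cases n) (simp_all add: th_def)

lemma th_add: "th (f + g) = th f + th g"
  by (simp add: th_def algebra_simps)

lemma th_diff: "th (f - g) = th f - th g"
  by (simp add: th_def algebra_simps)

lemma th_mult: "th (f * g) = th f * g + f * th g"
  by (simp add: th_def algebra_simps)

lemma th_power: "th (f ^ Suc n) = of_nat (Suc n) * f ^ n * th f"
  by (simp only: th_def fps_deriv_power') (simp add: algebra_simps)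

lemma th_const: "th (fps_const c) = 0"
  by (simp add: th_def)

lemma th_X_power: "th (fps_X ^ k) = of_nat k * fps_X ^ k"
  by (intro fps_ext) (simp add: th_nth)

definition Hs :: "nat \<Rightarrow> nat \<Rightarrow> nat \<Rightarrow> real fps" where
  "Hs D v m = Abs_fps (\<lambda>n. if 1 \<le> n \<and> n mod D = v mod D then real n ^ m else 0)"

lemma th_Hs: "th (Hs D v m) = Hs D v (Suc m)"
  by (intro fps_ext) (simp add: th_nth Hs_def)

lemma Hs0:
  assumes "1 \<le> v" "v \<le> D"
  shows "(1 - fps_X ^ D) * Hs D v 0 = fps_X ^ v"
proof (intro fps_ext)
  fix n
  have "((1 - fps_X ^ D) * Hs D v 0) $ n = Hs D v 0 $ n - (fps_X ^ D * Hs D v 0) $ n"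
    by (simp add: algebra_simps)
  also have "\<dots> = (if n = v then 1 else 0)"
  proof (cases "n < D")
    case True
    then show ?thesis using assms
      by (auto simp: fps_X_power_mult_nth Hs_def mod_if split: if_splits)
  next
    case False
    then obtain k where k: "n = D + k" by (metis le_Suc_ex not_less)
    have h1: "Hs D v 0 $ n = (if k mod D = v mod D then 1 else 0)" using k assms by (simp add: Hs_def)
    have h2: "(fps_X ^ D * Hs D v 0) $ n = (if 1 \<le> k \<and> k mod D = v mod D then 1 else 0)"
      using k by (simp add: fps_X_power_mult_nth Hs_def)
    have h3: "v mod D = 0 \<longleftrightarrow> v = D"
    proof
      assume "v mod D = 0"
      then have "D dvd v" by auto
      then show "v = D" using assms by (auto dest: dvd_imp_le elim!: dvdE)
    qed simp
    show ?thesis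
    proof (cases "k = 0")
      case True then show ?thesis using h1 h2 h3 k by auto
    next
      case False then show ?thesis using h1 h2 k assms by auto
    qed
  qed
  finally show "((1 - fps_X ^ D) * Hs D v 0) $ n = fps_X ^ v $ n" by simp
qed

definition Up :: "nat \<Rightarrow> real poly" where
  "Up D = 1 - monom 1 D"

definition thp :: "real poly \<Rightarrow> real poly" where
  "thp A = pCons 0 (pderiv A)"

lemma fps_of_poly_thp: "fps_of_poly (thp A) = th (fps_of_poly A)"
  by (simp add: thp_def fps_of_poly_pCons fps_of_poly_pderiv th_def mult.commute)

fun Ap :: "nat \<Rightarrow> nat \<Rightarrow> nat \<Rightarrow> real poly" where
  "Ap D v 0 = monom 1 v"
| "Ap D v (Suc m) = Up D * thp (Ap D v m) + smult (real (Suc m) * real D) (monom 1 D * Ap D v m)"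

lemma fps_of_poly_Up: "fps_of_poly (Up D) = 1 - fps_X ^ D"
  by (simp add: Up_def fps_of_poly_diff fps_of_poly_monom')

lemma Hs_Ap:
  assumes "1 \<le> v" "v \<le> D"
  shows "(1 - fps_X ^ D) ^ Suc m * Hs D v m = fps_of_poly (Ap D v m)"
proof (induction m)
  case 0
  then show ?case using Hs0[OF assms] by (simp add: fps_of_poly_monom')
next
  case (Suc m)
  define U where "U = (1 - fps_X ^ D :: real fps)"
  have thU: "th U = - of_nat D * fps_X ^ D" by (simp add: U_def th_diff th_X_power th_const[of 1, simplified])
  have IH: "U ^ Suc m * Hs D v m = fps_of_poly (Ap D v m)" using Suc.IH by (simp add: U_def)
  have "th (U ^ Suc m * Hs D v m) = th (fps_of_poly (Ap D v m))" using IH by simp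
  then have d: "of_nat (Suc m) * U ^ m * th U * Hs D v m + U ^ Suc m * Hs D v (Suc m) = th (fps_of_poly (Ap D v m))"
    by (simp only: th_mult th_power th_Hs)
  have e1: "U ^ Suc m * Hs D v (Suc m) = th (fps_of_poly (Ap D v m)) - of_nat (Suc m) * U ^ m * th U * Hs D v m"
    using d by (metis add_diff_cancel_left')
  have "U ^ Suc (Suc m) * Hs D v (Suc m) = U * (U ^ Suc m * Hs D v (Suc m))" by simp
  also have "\<dots> = U * (th (fps_of_poly (Ap D v m)) - of_nat (Suc m) * U ^ m * th U * Hs D v m)"
    by (simp only: e1)
  also have "\<dots> = U * th (fps_of_poly (Ap D v m)) + of_nat (Suc m) * of_nat D * fps_X ^ D * (U ^ Suc m * Hs D v m)"
    by (simp add: thU algebra_simps)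
  also have "\<dots> = U * th (fps_of_poly (Ap D v m)) + fps_const (real (Suc m) * real D) * (fps_X ^ D * fps_of_poly (Ap D v m))"
    by (simp only: IH fps_const_mult[symmetric] fps_of_nat mult.assoc)
  also have "\<dots> = fps_of_poly (Ap D v (Suc m))"
    by (simp only: Ap.simps U_def fps_of_poly_add fps_of_poly_mult fps_of_poly_Up fps_of_poly_thp
        fps_of_poly_smult fps_of_poly_monom')
  finally show ?case by (simp add: U_def)
qed


definition Psi :: "real poly \<Rightarrow> real fps" where
  "Psi A = poly (map_poly fps_const A) (fps_exp 1)"

lemma Psi_pCons: "Psi (pCons c p) = fps_const c + fps_exp 1 * Psi p"
  by (simp add: Psi_def map_poly_pCons)

lemma Psi_0 [simp]: "Psi 0 = 0"
  by (simp add: Psi_def)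

lemma Psi_add: "Psi (p + q) = Psi p + Psi q"
proof -
  have "map_poly fps_const (p + q) = map_poly fps_const p + map_poly fps_const q"
    by (intro poly_eqI) (simp add: coeff_map_poly)
  then show ?thesis by (simp add: Psi_def)
qed

lemma Psi_smult: "Psi (smult c p) = fps_const c * Psi p"
proof -
  have "map_poly fps_const (smult c p) = smult (fps_const c) (map_poly fps_const p)"
    by (intro poly_eqI) (simp add: coeff_map_poly)
  then show ?thesis by (simp add: Psi_def)
qed

lemma Psi_mult: "Psi (p * q) = Psi p * Psi q"
proof (induction p rule: pCons_induct)
  case (pCons c p)
  show ?case
    by (simp only: mult_pCons_left Psi_add Psi_smult Psi_pCons pCons.IH)
       (simp add: algebra_simps)
qed simp

lemma Psi_1 [simp]: "Psi 1 = 1"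
  by (simp add: Psi_def)

lemma Psi_minus: "Psi (- p) = - Psi p"
proof -
  have "map_poly fps_const (- p) = - map_poly fps_const p"
    by (intro poly_eqI) (simp add: coeff_map_poly)
  then show ?thesis by (simp add: Psi_def)
qed

lemma Psi_diff: "Psi (p - q) = Psi p - Psi q"
  using Psi_add[of p "-q"] Psi_minus[of q] by simp

lemma Psi_power: "Psi (p ^ n) = Psi p ^ n"
  by (induction n) (simp_all add: Psi_mult)

lemma Psi_sum: "Psi (sum f A) = (\<Sum>x\<in>A. Psi (f x))"
  by (induction A rule: infinite_finite_induct) (simp_all add: Psi_add)

lemma Psi_prod: "Psi (prod f A) = (\<Prod>x\<in>A. Psi (f x))"
  by (induction A rule: infinite_finite_induct) (simp_all add: Psi_mult)

lemma Psi_monom: "Psi (monom 1 k) = fps_exp (real k)"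
  by (simp add: Psi_def map_poly_monom poly_monom fps_exp_power_mult)

lemma Psi_deriv: "fps_deriv (Psi p) = Psi (thp p)"
proof (induction p rule: pCons_induct)
  case (pCons c p)
  have "thp (pCons c p) = pCons 0 (p + thp p)"
    by (simp add: thp_def pderiv_pCons)
  then show ?case
    by (simp add: Psi_pCons pCons.IH Psi_add algebra_simps)
qed (simp add: thp_def)

definition W :: "nat \<Rightarrow> real fps" where
  "W D = Abs_fps (\<lambda>n. real D ^ (n + 1) / fact (n + 1))"

lemma X_W: "fps_X * W D = fps_exp (real D) - 1"
proof (intro fps_ext)
  fix n show "(fps_X * W D) $ n = (fps_exp (real D) - 1) $ n"
    by (cases n) (simp_all add: W_def algebra_simps)
qed

lemma W_0: "D \<ge> 1 \<Longrightarrow> W D $ 0 \<noteq> 0"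
  by (simp add: W_def)

fun Y :: "nat \<Rightarrow> nat \<Rightarrow> nat \<Rightarrow> real fps" where
  "Y D v 0 = - fps_exp (real v) * inverse (W D)"
| "Y D v (Suc m) = fps_X * fps_deriv (Y D v m) - of_nat (Suc m) * Y D v m"

lemma alg_step:
  fixes u Y a Y' a' u' X c :: "'a::comm_ring_1"
  assumes h1: "u ^ Suc m * Y = X ^ Suc m * a"
    and h2: "u ^ Suc m * Y' + c * u' * u ^ m * Y = X ^ Suc m * a' + c * 1 * X ^ m * a"
  shows "u ^ Suc (Suc m) * (X * Y' - c * Y) = X ^ Suc (Suc m) * (u * a' - c * u' * a)"
proof -
  have "u ^ Suc (Suc m) * (X * Y' - c * Y) = X * u * (u ^ Suc m * Y') - c * u * (u ^ Suc m * Y)"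
    by (simp add: algebra_simps)
  also have "u ^ Suc m * Y' = X ^ Suc m * a' + c * 1 * X ^ m * a - c * u' * u ^ m * Y"
    using h2 by (simp add: algebra_simps)
  finally have "u ^ Suc (Suc m) * (X * Y' - c * Y) =
     X * u * (X ^ Suc m * a' + c * X ^ m * a) - X * c * u' * (u ^ Suc m * Y) - c * u * (u ^ Suc m * Y)"
    by (simp add: algebra_simps)
  also have "\<dots> = X * u * (X ^ Suc m * a' + c * X ^ m * a) - X * c * u' * (X ^ Suc m * a) - c * u * (X ^ Suc m * a)"
    by (simp only: h1)
  also have "\<dots> = X ^ Suc (Suc m) * (u * a' - c * u' * a)"
    by (simp add: algebra_simps)
  finally show ?thesis .
qed

lemma Psi_Up: "Psi (Up D) = 1 - fps_exp (real D)"
  by (simp add: Up_def Psi_diff Psi_monom)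

lemma Y_Psi:
  assumes "D \<ge> 1"
  shows "(1 - fps_exp (real D)) ^ Suc m * Y D v m = fps_X ^ Suc m * Psi (Ap D v m)"
proof (induction m)
  case 0
  have e: "1 - fps_exp (real D) = - (fps_X * W D)" by (simp add: X_W)
  have "(1 - fps_exp (real D)) * Y D v 0 = (fps_X * W D) * (fps_exp (real v) * inverse (W D))"
    unfolding e by simp
  also have "\<dots> = fps_X * fps_exp (real v) * (W D * inverse (W D))"
    by (simp only: mult_ac)
  also have "\<dots> = fps_X * fps_exp (real v)"
    using inverse_mult_eq_1'[OF W_0[OF assms]] by simp
  finally show ?case by (simp add: Psi_monom)
next
  case (Suc m)
  define u where "u = 1 - fps_exp (real D)"
  define a where "a = Psi (Ap D v m)"
  define c :: "real fps" where "c = of_nat (Suc m)"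
  have du: "fps_deriv u = fps_const (- real D) * fps_exp (real D)"
    by (simp add: u_def fps_const_neg[symmetric] del: fps_const_neg)
  have h1: "u ^ Suc m * Y D v m = fps_X ^ Suc m * a"
    using Suc.IH by (simp add: u_def a_def)
  have "fps_deriv (u ^ Suc m * Y D v m) = fps_deriv (fps_X ^ Suc m * a)"
    using h1 by simp
  then have h2: "u ^ Suc m * fps_deriv (Y D v m) + c * fps_deriv u * u ^ m * Y D v m =
      fps_X ^ Suc m * fps_deriv a + c * 1 * fps_X ^ m * a"
    by (simp only: fps_deriv_mult fps_deriv_power' diff_Suc_1 c_def fps_deriv_fps_X)
  have "u ^ Suc (Suc m) * (fps_X * fps_deriv (Y D v m) - c * Y D v m) =
     fps_X ^ Suc (Suc m) * (u * fps_deriv a - c * fps_deriv u * a)"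
    by (rule alg_step[OF h1 h2])
  moreover have "u * fps_deriv a - c * fps_deriv u * a = Psi (Ap D v (Suc m))"
    by (simp add: a_def Psi_deriv du c_def Psi_add Psi_mult Psi_smult Psi_Up Psi_monom u_def
        fps_of_nat[symmetric] algebra_simps)
  ultimately show ?case by (simp add: u_def c_def)
qed


lemma Y_nth: "Y D v m $ n = Y D v 0 $ n * (\<Prod>i<m. real n - real i - 1)"
proof (induction m)
  case (Suc m)
  have "Y D v (Suc m) $ n = th (Y D v m) $ n - real (Suc m) * Y D v m $ n"
    by (simp only: Y.simps th_def fps_sub_nth fps_of_nat[symmetric] fps_mult_left_const_nth)
  also have "\<dots> = (real n - real m - 1) * Y D v m $ n"
    by (simp add: th_nth algebra_simps)
  finally show ?case using Suc.IH by (simp add: algebra_simps)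
qed simp

definition Sc :: "real \<Rightarrow> real fps \<Rightarrow> real fps" where
  "Sc c f = Abs_fps (\<lambda>n. c ^ n * f $ n)"

lemma Sc_mult: "Sc c (f * g) = Sc c f * Sc c g"
proof (intro fps_ext)
  fix n
  have "Sc c (f * g) $ n = (\<Sum>i=0..n. c ^ n * (f $ i * g $ (n - i)))"
    by (simp add: Sc_def fps_mult_nth sum_distrib_left)
  also have "\<dots> = (\<Sum>i=0..n. (c ^ i * f $ i) * (c ^ (n - i) * g $ (n - i)))"
  proof (intro sum.cong refl)
    fix i assume "i \<in> {0..n}"
    then have "c ^ n = c ^ i * c ^ (n - i)" by (simp add: power_add[symmetric])
    then show "c ^ n * (f $ i * g $ (n - i)) = (c ^ i * f $ i) * (c ^ (n - i) * g $ (n - i))"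
      by (simp add: algebra_simps)
  qed
  also have "\<dots> = (Sc c f * Sc c g) $ n"
    by (simp add: Sc_def fps_mult_nth)
  finally show "Sc c (f * g) $ n = (Sc c f * Sc c g) $ n" .
qed

lemma Sc_1: "Sc c 1 = 1"
  by (intro fps_ext) (simp add: Sc_def)

lemma Sc_inverse:
  assumes "f $ 0 \<noteq> 0"
  shows "Sc c (inverse f) = inverse (Sc c f)"
proof -
  have "Sc c f * Sc c (inverse f) = 1"
    using inverse_mult_eq_1'[OF assms] by (simp add: Sc_mult[symmetric] Sc_1)
  then show ?thesis by (rule fps_inverse_unique[symmetric])
qed

lemma Sc_exp: "Sc c (fps_exp x) = fps_exp (c * x)"
  by (intro fps_ext) (simp add: Sc_def power_mult_distrib)

lemma W_Sc: "W D = fps_const (real D) * Sc (real D) (W 1)"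
  by (intro fps_ext) (simp add: Sc_def W_def)

lemma bern_fps: "fps_X * fps_exp x / (fps_exp 1 - 1) = fps_exp x * inverse (W 1)"
proof -
  have w1: "W 1 $ 0 \<noteq> 0" by (simp add: W_def)
  have e: "fps_exp 1 - 1 = fps_X * W 1" using X_W[of 1] by simp
  have h: "fps_X * fps_exp x = (fps_exp x * inverse (W 1)) * (fps_X * W 1)"
    using inverse_mult_eq_1[OF w1] by (simp add: mult_ac)
  have nz: "fps_X * W 1 \<noteq> 0" using w1 by auto
  have "fps_X * fps_exp x / (fps_exp 1 - 1) = (fps_exp x * inverse (W 1)) * (fps_X * W 1) / (fps_X * W 1)"
    by (simp only: h e)
  also have "\<dots> = fps_exp x * inverse (W 1)"
    by (rule fps_divide_times_eq[OF nz])
  finally show ?thesis .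
qed

lemma bernpoly_alt: "bernpoly n x = fact n * (fps_exp x * inverse (W 1)) $ n"
  by (simp only: bernpoly_def bern_fps)

lemma bern_nth: "(fps_exp x * inverse (W 1)) $ n = bernpoly n x / fact n"
  by (simp add: bernpoly_alt)

lemma Y0_nth:
  assumes "D \<ge> 1"
  shows "Y D v 0 $ n = - (real D ^ n * bernpoly n (real v / real D) / (real D * fact n))"
proof -
  have w1: "W 1 $ 0 \<noteq> 0" by (simp add: W_def)
  have Dn: "real D \<noteq> 0" using assms by simp
  have dd: "real D * (real v / real D) = real v" using Dn by simp
  have ev: "fps_exp (real v) = Sc (real D) (fps_exp (real v / real D))"
    by (simp only: Sc_exp dd)
  have iW: "inverse (W D) = fps_const (1 / real D) * Sc (real D) (inverse (W 1))"
    by (simp only: W_Sc[of D] fps_inverse_mult Sc_inverse[OF w1] fps_const_inverse divide_inverse mult_1)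
  have "Y D v 0 = - (fps_const (1 / real D) * (Sc (real D) (fps_exp (real v / real D)) * Sc (real D) (inverse (W 1))))"
    by (simp only: Y.simps ev iW) (simp add: algebra_simps)
  also have "\<dots> = - (fps_const (1 / real D) * Sc (real D) (fps_exp (real v / real D) * inverse (W 1)))"
    by (simp only: Sc_mult)
  finally have "Y D v 0 $ n = - (1 / real D * (real D ^ n * (fps_exp (real v / real D) * inverse (W 1)) $ n))"
    by (simp only: fps_neg_nth fps_mult_left_const_nth Sc_def fps_nth_Abs_fps)
  also have "\<dots> = - (real D ^ n * bernpoly n (real v / real D) / (real D * fact n))"
    by (simp only: bern_nth) (simp add: field_simps)
  finally show ?thesis .
qed


lemma per_mod:
  fixes d :: "nat \<Rightarrow> real" and D :: nat
  assumes "\<forall>n. d (n + D) = (d n :: real)"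
  shows "d n = d (n mod D)"
proof -
  have "d (x + q * D) = d x" for x q
  proof (induction q)
    case (Suc q)
    have "x + Suc q * D = (x + q * D) + D" by simp
    then show ?case using assms Suc.IH by metis
  qed simp
  from this[of "n mod D" "n div D"] show ?thesis by (simp add: mod_div_mult_eq)
qed

lemma part_count_0: "\<forall>i<length a. a ! i > 0 \<Longrightarrow> part_count a 0 = 1"
proof (induction a)
  case Nil then show ?case by (simp add: part_count_Nil)
next
  case (Cons b a)
  have "\<forall>i<length a. a ! i > 0" using Cons.prems by auto
  then show ?case using pc_rec[OF Cons.prems, of 0] Cons.IH by auto
qed

lemma prod_nth0: "(\<Prod>i\<in>A. f i :: real fps) $ 0 = (\<Prod>i\<in>A. f i $ 0)"
  by (induction A rule: infinite_finite_induct) simp_all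

lemma prod_shift_fact: "(\<Prod>i<m. real (k + m + 1) - real i - 1) = fact (k + m) / fact k"
proof (induction m)
  case (Suc m)
  have "(\<Prod>i<Suc m. real (k + Suc m + 1) - real i - 1) =
        (real (k + m + 1)) * (\<Prod>i<m. real (k + m + 1) - real i - 1)"
    by (simp only: prod.lessThan_Suc_shift) (simp add: algebra_simps)
  also have "\<dots> = fact (k + Suc m) / fact k" using Suc.IH by simp
  finally show ?case .
qed simp

lemma Fa_minus_1:
  fixes a :: "nat list" and D :: nat and d :: "nat \<Rightarrow> nat \<Rightarrow> real"
  assumes a_pos: "\<forall>i < length a. a ! i > 0"
    and D_pos: "D \<ge> 1"
    and d_per: "\<forall>m < length a. \<forall>n. d m (n + D) = d m n"
    and d_quasi: "\<forall>n. real (part_count a n) = (\<Sum>m < length a. d m n * real n ^ m)"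
  shows "Fa a - 1 = (\<Sum>m<length a. \<Sum>v\<in>{1..D}. fps_const (d m v) * Hs D v m)"
proof (intro fps_ext)
  fix n
  show "(Fa a - 1) $ n = (\<Sum>m<length a. \<Sum>v\<in>{1..D}. fps_const (d m v) * Hs D v m) $ n"
  proof (cases "n = 0")
    case True
    then show ?thesis using part_count_0[OF a_pos] by (simp add: Fa_def Hs_def fps_sum_nth)
  next
    case False
    define v0 where "v0 = (if n mod D = 0 then D else n mod D)"
    have v0: "v0 \<in> {1..D}" using D_pos by (auto simp: v0_def intro: Suc_leI)
    have v0m: "v0 mod D = n mod D" by (simp add: v0_def)
    have iff: "(n mod D = v mod D) = (v = v0)" if "v \<in> {1..D}" for v
    proof (cases "v = D")
      case True
      have "n mod D < D" using D_pos by simp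
      with True show ?thesis by (auto simp: v0_def)
    next
      case False
      then have "v < D" "v \<ge> 1" using that by auto
      then show ?thesis by (auto simp: v0_def)
    qed
    have inner: "(\<Sum>v\<in>{1..D}. d m v * (if 1 \<le> n \<and> n mod D = v mod D then real n ^ m else 0))
        = d m n * real n ^ m" if m: "m < length a" for m
    proof -
      have "(\<Sum>v\<in>{1..D}. d m v * (if 1 \<le> n \<and> n mod D = v mod D then real n ^ m else 0))
          = (\<Sum>v\<in>{1..D}. if v = v0 then d m v * real n ^ m else 0)"
        using False iff by (intro sum.cong refl) auto
      also have "\<dots> = d m v0 * real n ^ m" using v0 by (simp add: sum.delta)
      also have "d m v0 = d m n"
        using per_mod[of "d m" D] d_per m v0m by metis
      finally show ?thesis .
    qed
    have "(\<Sum>m<length a. \<Sum>v\<in>{1..D}. fps_const (d m v) * Hs D v m) $ n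
        = (\<Sum>m<length a. \<Sum>v\<in>{1..D}. d m v * (if 1 \<le> n \<and> n mod D = v mod D then real n ^ m else 0))"
      by (simp add: fps_sum_nth Hs_def)
    also have "\<dots> = (\<Sum>m<length a. d m n * real n ^ m)"
      by (intro sum.cong refl inner) simp
    also have "\<dots> = (Fa a - 1) $ n" using d_quasi False by (simp add: Fa_def)
    finally show ?thesis by simp
  qed
qed


lemma X_W': "1 - fps_exp (real c) = - (fps_X * W c)"
  by (simp add: X_W)

lemma neg1_pow_nth: "((-1::real fps) ^ r * f) $ n = (-1) ^ r * f $ n"
proof (induction r)
  case (Suc r)
  have "(-1::real fps) ^ Suc r * f = - ((-1) ^ r * f)" by simp
  then show ?case using Suc.IH by simp
qed simp

lemma arith1:
  fixes x D N F G :: real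
  assumes "D \<noteq> 0" "N \<noteq> 0" "F \<noteq> 0" "G \<noteq> 0"
  shows "x / N = - (D * G) * (- (x / (D * (N * F))) * (F / G))"
  using assms by (simp add: field_simps)

lemma row_identity:
  fixes a :: "nat list" and D :: nat and d :: "nat \<Rightarrow> nat \<Rightarrow> real" and k :: nat
  assumes r_pos: "length a \<ge> 1"
    and a_pos: "\<forall>i < length a. a ! i > 0"
    and D_pos: "D \<ge> 1"
    and d_per: "\<forall>m < length a. \<forall>n. d m (n + D) = d m n"
    and d_quasi: "\<forall>n. real (part_count a n) = (\<Sum>m < length a. d m n * real n ^ m)"
    and k_pos: "k \<ge> 1"
  shows "(\<Sum>m<length a. \<Sum>v\<in>{1..D}. d m v *
            (real D ^ (k + 1 + m) * bernpoly (k + 1 + m) (real v / real D) / real (k + 1 + m)))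
       = (-1) ^ (length a - 1) * fact k * real D / fact (k + length a) * barnes (k + length a) a"
proof -
  define r where "r = length a"
  define U :: "real fps" where "U = 1 - fps_X ^ D"
  define Pp :: "real poly" where "Pp = (\<Prod>i<r. 1 - monom 1 (a ! i))"
  define cf where "cf = (\<lambda>m v. fps_const (d m v))"
  have FP: "Fa a * Pa a = 1" by (rule Fa_Pa[OF a_pos])
  have F1: "Fa a - 1 = (\<Sum>m<r. \<Sum>v\<in>{1..D}. cf m v * Hs D v m)"
    unfolding r_def cf_def by (rule Fa_minus_1[OF a_pos D_pos d_per d_quasi])
  have PaP: "Pa a = fps_of_poly Pp"
    by (simp add: Pa_def Pp_def r_def fps_of_poly_prod fps_of_poly_diff fps_of_poly_monom')
  have UH: "U ^ r * Hs D v m = U ^ (r - 1 - m) * fps_of_poly (Ap D v m)"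
    if "m < r" "v \<in> {1..D}" for m v
  proof -
    have "r = (r - 1 - m) + Suc m" using that by simp
    then have "U ^ r = U ^ (r - 1 - m) * U ^ Suc m" by (metis power_add)
    moreover have "U ^ Suc m * Hs D v m = fps_of_poly (Ap D v m)"
      unfolding U_def using that by (intro Hs_Ap) auto
    ultimately show ?thesis by (simp only: mult.assoc)
  qed
  have E1: "U ^ r * (1 - Pa a) = Pa a * (\<Sum>m<r. \<Sum>v\<in>{1..D}. cf m v * (U ^ (r - 1 - m) * fps_of_poly (Ap D v m)))"
  proof -
    have "1 - Pa a = (Fa a - 1) * Pa a" using FP by (simp add: algebra_simps)
    then have "U ^ r * (1 - Pa a) = Pa a * (\<Sum>m<r. \<Sum>v\<in>{1..D}. cf m v * (U ^ r * Hs D v m))"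
      unfolding F1 by (simp add: sum_distrib_left sum_distrib_right mult_ac)
    also have "\<dots> = Pa a * (\<Sum>m<r. \<Sum>v\<in>{1..D}. cf m v * (U ^ (r - 1 - m) * fps_of_poly (Ap D v m)))"
      by (intro arg_cong[where f="(*) (Pa a)"] sum.cong refl) (simp add: UH)
    finally show ?thesis .
  qed
  have PE: "Up D ^ r * (1 - Pp) = Pp * (\<Sum>m<r. \<Sum>v\<in>{1..D}. smult (d m v) (Up D ^ (r - 1 - m) * Ap D v m))"
  proof -
    have "fps_of_poly (Up D ^ r * (1 - Pp)) = fps_of_poly (Pp * (\<Sum>m<r. \<Sum>v\<in>{1..D}. smult (d m v) (Up D ^ (r - 1 - m) * Ap D v m)))"
      using E1 unfolding PaP
      by (simp add: fps_of_poly_mult fps_of_poly_power fps_of_poly_diff fps_of_poly_Up fps_of_poly_sum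
          fps_of_poly_smult cf_def U_def)
    then show ?thesis by (simp only: fps_of_poly_eq_iff)
  qed
  define u where "u = 1 - fps_exp (real D)"
  define PP where "PP = (\<Prod>i<r. 1 - fps_exp (real (a ! i)))"
  have PsiPp: "Psi Pp = PP"
    by (simp add: Pp_def PP_def Psi_prod Psi_diff Psi_monom)
  have E2: "u ^ r * (1 - PP) = PP * (\<Sum>m<r. \<Sum>v\<in>{1..D}. cf m v * (u ^ (r - 1 - m) * Psi (Ap D v m)))"
  proof -
    have "Psi (Up D ^ r * (1 - Pp)) = Psi (Pp * (\<Sum>m<r. \<Sum>v\<in>{1..D}. smult (d m v) (Up D ^ (r - 1 - m) * Ap D v m)))"
      using PE by simp
    then show ?thesis
      by (simp add: Psi_mult Psi_power Psi_diff Psi_Up Psi_sum Psi_smult PsiPp cf_def u_def)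
  qed
  define S where "S = (\<Sum>m<r. \<Sum>v\<in>{1..D}. cf m v * (fps_X ^ (r - 1 - m) * Y D v m))"
  have XY: "fps_X ^ r * (u ^ (r - 1 - m) * Psi (Ap D v m)) = u ^ r * (fps_X ^ (r - 1 - m) * Y D v m)"
    if "m < r" for m v
  proof -
    have r1: "r = (r - 1 - m) + Suc m" using that by simp
    have "fps_X ^ r * (u ^ (r - 1 - m) * Psi (Ap D v m)) = fps_X ^ (r - 1 - m) * u ^ (r - 1 - m) * (fps_X ^ Suc m * Psi (Ap D v m))"
      by (subst r1, simp only: power_add) (simp add: mult_ac)
    also have "\<dots> = fps_X ^ (r - 1 - m) * u ^ (r - 1 - m) * (u ^ Suc m * Y D v m)"
      using Y_Psi[OF D_pos, of m v] by (simp add: u_def)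
    also have "\<dots> = u ^ r * (fps_X ^ (r - 1 - m) * Y D v m)"
      by (subst (3) r1, simp only: power_add) (simp add: mult_ac)
    finally show ?thesis .
  qed
  have E3: "u ^ r * (fps_X ^ r * (1 - PP)) = u ^ r * (PP * S)"
  proof -
    have "u ^ r * (fps_X ^ r * (1 - PP)) = fps_X ^ r * (u ^ r * (1 - PP))" by (simp add: mult_ac)
    also have "\<dots> = PP * (\<Sum>m<r. \<Sum>v\<in>{1..D}. cf m v * (fps_X ^ r * (u ^ (r - 1 - m) * Psi (Ap D v m))))"
      unfolding E2 by (simp add: sum_distrib_left mult_ac)
    also have "\<dots> = PP * (\<Sum>m<r. \<Sum>v\<in>{1..D}. cf m v * (u ^ r * (fps_X ^ (r - 1 - m) * Y D v m)))"
      by (intro arg_cong[where f="(*) PP"] sum.cong refl) (metis XY lessThan_iff)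
    also have "\<dots> = u ^ r * (PP * S)"
      by (simp add: S_def sum_distrib_left mult_ac)
    finally show ?thesis .
  qed
  have u_nz: "u \<noteq> 0"
  proof
    assume "u = 0"
    then have "u $ 1 = 0" by simp
    then show False using D_pos by (simp add: u_def)
  qed
  have E4: "fps_X ^ r * (1 - PP) = PP * S"
    using E3 u_nz by simp
  define V where "V = (\<Prod>i<r. W (a ! i))"
  have PPV: "PP = (-1) ^ r * (fps_X ^ r * V)"
  proof -
    have "PP = (\<Prod>i<r. (-1) * (fps_X * W (a ! i)))"
      by (simp add: PP_def X_W')
    also have "\<dots> = (\<Prod>i<r. (-1::real fps)) * ((\<Prod>i<r. fps_X) * (\<Prod>i<r. W (a ! i)))"
      by (simp only: prod.distrib)
    also have "\<dots> = (-1) ^ r * (fps_X ^ r * V)"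
      by (simp only: prod_constant card_lessThan V_def)
    finally show ?thesis .
  qed
  have V0: "V $ 0 \<noteq> 0"
    using a_pos by (simp add: V_def prod_nth0 W_def r_def)
  have E5: "1 - PP = (-1) ^ r * V * S"
  proof -
    have "fps_X ^ r * (1 - PP) = fps_X ^ r * ((-1) ^ r * V * S)"
      using E4 by (simp add: PPV mult_ac)
    then show ?thesis by simp
  qed
  have iV: "inverse V * V = 1" by (rule inverse_mult_eq_1[OF V0])
  have m1: "((-1) ^ r * (-1) ^ r :: real fps) = 1"
    by (simp add: power_mult_distrib[symmetric])
  have SE: "S = (-1) ^ r * inverse V - fps_X ^ r"
  proof -
    have "(-1) ^ r * inverse V * (1 - PP) = ((-1) ^ r * (-1) ^ r) * (inverse V * V) * S"
      by (simp add: E5 mult_ac)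
    then have "S = (-1) ^ r * inverse V * (1 - PP)" by (simp add: iV m1)
    also have "\<dots> = (-1) ^ r * inverse V - ((-1) ^ r * (-1) ^ r) * (inverse V * V) * fps_X ^ r"
      by (simp add: PPV algebra_simps)
    finally show ?thesis by (simp add: iV m1)
  qed
  have barnes_eq: "barnes j a = fact j * inverse V $ j" for j
  proof -
    have "(\<Prod>i<r. fps_exp (real (a ! i)) - 1) = fps_X ^ r * V"
      by (simp add: X_W[symmetric] prod.distrib V_def)
    moreover have "fps_X ^ r = inverse V * (fps_X ^ r * V)"
      using iV by (simp add: mult_ac)
    moreover have "fps_X ^ r * V \<noteq> 0" using V0 by auto
    ultimately have "fps_X ^ r / (\<Prod>i<r. fps_exp (real (a ! i)) - 1) = inverse V"
      by (metis fps_divide_times_eq)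
    then show ?thesis by (simp add: barnes_def r_def)
  qed
  have Snth: "S $ (k + r) = (-1) ^ r * barnes (k + r) a / fact (k + r)"
  proof -
    have "S $ (k + r) = ((-1) ^ r * inverse V) $ (k + r)"
      using k_pos by (simp add: SE)
    also have "((-1) ^ r * inverse V :: real fps) $ (k + r) = (-1) ^ r * inverse V $ (k + r)"
      by (rule neg1_pow_nth)
    finally show ?thesis by (simp add: barnes_eq)
  qed
  have Ent: "real D ^ (k + 1 + m) * bernpoly (k + 1 + m) (real v / real D) / real (k + 1 + m)
      = - (real D * fact k) * Y D v m $ (k + m + 1)" for v m
  proof -
    define N where "N = k + 1 + m"
    have N1: "k + m + 1 = N" by (simp add: N_def)
    have Yv: "Y D v m $ N = - (real D ^ N * bernpoly N (real v / real D) / (real D * fact N)) * (fact (k + m) / fact k)"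
      unfolding N1[symmetric] by (simp only: Y_nth[of D v m] Y0_nth[OF D_pos] prod_shift_fact)
    have fN: "(fact N :: real) = real N * fact (k + m)" by (simp add: N_def)
    have "real D ^ N * bernpoly N (real v / real D) / real N
        = - (real D * fact k) * (- (real D ^ N * bernpoly N (real v / real D) / (real D * (real N * fact (k + m)))) * (fact (k + m) / fact k))"
      by (rule arith1) (use D_pos in \<open>simp_all add: N_def\<close>)
    then show ?thesis unfolding N1 Yv fN by (simp only: N_def)
  qed
  have "S $ (k + r) = (\<Sum>m<r. \<Sum>v\<in>{1..D}. d m v * Y D v m $ (k + m + 1))"
  proof -
    have "S $ (k + r) = (\<Sum>m<r. \<Sum>v\<in>{1..D}. d m v * (fps_X ^ (r - 1 - m) * Y D v m) $ (k + r))"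
      by (simp add: S_def fps_sum_nth cf_def)
    also have "\<dots> = (\<Sum>m<r. \<Sum>v\<in>{1..D}. d m v * Y D v m $ (k + m + 1))"
    proof (intro sum.cong refl)
      fix m v assume "m \<in> {..<r}"
      then have "\<not> k + r < r - 1 - m" "k + r - (r - 1 - m) = k + m + 1" by auto
      then show "d m v * (fps_X ^ (r - 1 - m) * Y D v m) $ (k + r) = d m v * Y D v m $ (k + m + 1)"
        by (simp only: fps_X_power_mult_nth if_False)
    qed
    finally show ?thesis .
  qed
  note Ssum = this
  have "(\<Sum>m<r. \<Sum>v\<in>{1..D}. d m v *
            (real D ^ (k + 1 + m) * bernpoly (k + 1 + m) (real v / real D) / real (k + 1 + m)))
      = (\<Sum>m<r. \<Sum>v\<in>{1..D}. d m v * (- (real D * fact k) * Y D v m $ (k + m + 1)))"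
    by (intro sum.cong refl) (simp only: Ent)
  also have "\<dots> = - (real D * fact k) * (\<Sum>m<r. \<Sum>v\<in>{1..D}. d m v * Y D v m $ (k + m + 1))"
    by (simp add: sum_distrib_left mult_ac)
  also have "\<dots> = - (real D * fact k) * S $ (k + r)"
    by (simp only: Ssum)
  also have "\<dots> = (-1) ^ (r - 1) * fact k * real D / fact (k + r) * barnes (k + r) a"
  proof -
    have "(-1 :: real) ^ r = - ((-1) ^ (r - 1))" using r_pos unfolding r_def
      by (cases "length a") simp_all
    then show ?thesis by (simp add: Snth)
  qed
  finally show ?thesis by (simp add: r_def)
qed


lemma block_sum:
  fixes g :: "nat \<Rightarrow> nat \<Rightarrow> real"
  assumes "D \<ge> 1"
  shows "(\<Sum>c<r * D. g (c div D) (c mod D + 1)) = (\<Sum>m<r. \<Sum>v\<in>{1..D}. g m v)"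
proof (induction r)
  case (Suc r)
  have un: "{..<Suc r * D} = {..<r * D} \<union> {r * D..<D + r * D}" by auto
  have "(\<Sum>c\<in>{r * D..<D + r * D}. g (c div D) (c mod D + 1)) = (\<Sum>j\<in>{0..<D}. g ((j + r * D) div D) ((j + r * D) mod D + 1))"
    using sum.shift_bounds_nat_ivl[of "\<lambda>c. g (c div D) (c mod D + 1)" 0 "r * D" D] by simp
  also have "\<dots> = (\<Sum>j<D. g r (Suc j))"
    using assms by (intro sum.cong) auto
  also have "\<dots> = (\<Sum>v\<in>{1..D}. g r v)"
    using sum.atLeast1_atMost_eq[of "g r" D] by simp
  finally have "(\<Sum>c\<in>{r * D..<D + r * D}. g (c div D) (c mod D + 1)) = (\<Sum>v\<in>{1..D}. g r v)" .
  then show ?case unfolding un using Suc.IH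
    by (subst sum.union_disjoint) auto
qed simp

theorem proposition1p1:
  fixes a :: "nat list" and D :: nat and d :: "nat \<Rightarrow> nat \<Rightarrow> real"
    and alpha :: "nat \<Rightarrow> nat"
  assumes r_pos: "length a \<ge> 1"
    and a_pos: "\<forall>i < length a. a ! i > 0"
    and D_pos: "D \<ge> 1"
    and D_mult: "\<forall>i < length a. a ! i dvd D"
    and d_per: "\<forall>m < length a. \<forall>n. d m (n + D) = d m n"
    and d_quasi: "\<forall>n. real (part_count a n) = (\<Sum>m < length a. d m n * real n ^ m)"
    and alpha_ge: "alpha 1 \<ge> 2"
    and alpha_inc: "\<forall>j k. 1 \<le> j \<and> j < k \<and> k \<le> length a * D \<longrightarrow> alpha j < alpha k"
    and Delta_nz: "det (coeff_mat (length a) D alpha) \<noteq> 0"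
  shows "(\<forall>v \<in> {1..D}. \<forall>m < length a.
            d m v = det (repl_mat a D alpha m v) / det (coeff_mat (length a) D alpha))
       \<and> (\<forall>n v. v \<in> {1..D} \<and> v mod D = n mod D \<longrightarrow>
            real (part_count a n) = 1 / det (coeff_mat (length a) D alpha) *
              (\<Sum>m < length a. det (repl_mat a D alpha m v) * real n ^ m))"
proof -
  define r where "r = length a"
  define M where "M = coeff_mat r D alpha"
  define x where "x = vec (r * D) (\<lambda>c. d (c div D) (c mod D + 1))"
  define bv where "bv = vec (r * D) (\<lambda>i. (-1) ^ (r - 1) * fact (alpha (i + 1) - 1) * real D
      / fact (alpha (i + 1) + r - 1) * barnes (alpha (i + 1) + r - 1) a)"
  have M_car: "M \<in> carrier_mat (r * D) (r * D)" by (simp add: M_def coeff_mat_def)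
  have x_car: "x \<in> carrier_vec (r * D)" by (simp add: x_def)
  have alpha_ge2: "alpha j \<ge> 2" if "1 \<le> j" "j \<le> r * D" for j
  proof (cases "j = 1")
    case True then show ?thesis using alpha_ge by simp
  next
    case False
    then have "alpha 1 < alpha j" using alpha_inc that by (auto simp: r_def)
    then show ?thesis using alpha_ge by simp
  qed
  have Mx: "M *\<^sub>v x = bv"
  proof (rule eq_vecI)
    show "dim_vec (M *\<^sub>v x) = dim_vec bv" using M_car by (simp add: bv_def)
  next
    fix i assume "i < dim_vec bv"
    then have i: "i < r * D" by (simp add: bv_def)
    have a2: "alpha (i + 1) \<ge> 2" using alpha_ge2[of "i + 1"] i by simp
    define k where "k = alpha (i + 1) - 1"
    have k: "alpha (i + 1) = k + 1" "k \<ge> 1" using a2 by (simp_all add: k_def)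
    have "vec_index (M *\<^sub>v x) i = (\<Sum>c<r * D. M $$ (i, c) * vec_index x c)"
      using M_car i by (simp add: scalar_prod_def atLeast0LessThan x_def)
    also have "\<dots> = (\<Sum>c<r * D. d (c div D) (c mod D + 1) *
        (real D ^ (k + 1 + c div D) * bernpoly (k + 1 + c div D) (real (c mod D + 1) / real D) / real (k + 1 + c div D)))"
      using i k by (intro sum.cong refl) (simp add: M_def coeff_mat_def x_def Let_def ac_simps)
    also have "\<dots> = (\<Sum>m<r. \<Sum>v\<in>{1..D}. d m v *
        (real D ^ (k + 1 + m) * bernpoly (k + 1 + m) (real v / real D) / real (k + 1 + m)))"
      by (rule block_sum[OF D_pos, where g = "\<lambda>m v. d m v *
        (real D ^ (k + 1 + m) * bernpoly (k + 1 + m) (real v / real D) / real (k + 1 + m))"])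
    also have "\<dots> = (-1) ^ (r - 1) * fact k * real D / fact (k + r) * barnes (k + r) a"
      unfolding r_def by (rule row_identity[OF r_pos a_pos D_pos d_per d_quasi k(2)])
    also have "\<dots> = vec_index bv i"
      using i k by (simp add: bv_def)
    finally show "vec_index (M *\<^sub>v x) i = vec_index bv i" .
  qed
  have part1: "d m v = det (repl_mat a D alpha m v) / det M" if v: "v \<in> {1..D}" and m: "m < r" for m v
  proof -
    define c where "c = m * D + v - 1"
    have c: "c < r * D"
    proof -
      have "m * D + v \<le> m * D + D" using v by simp
      also have "\<dots> = Suc m * D" by simp
      also have "\<dots> \<le> r * D" using m by (intro mult_right_mono) auto
      finally have "m * D + v \<le> r * D" .
      moreover have "v \<ge> 1" using v by simp
      ultimately show ?thesis unfolding c_def by linarith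
    qed
    have cdm: "c div D = m" "c mod D + 1 = v"
    proof -
      have ce: "c = (v - 1) + m * D" using v by (simp add: c_def)
      have j: "v - 1 < D" using v by auto
      have Dp: "D > 0" using D_pos by simp
      show "c div D = m" unfolding ce using j Dp by simp
      have "c mod D = (v - 1) mod D" unfolding ce by (rule mod_mult_self1)
      also have "\<dots> = v - 1" using j by simp
      finally show "c mod D + 1 = v" using v by simp
    qed
    have R: "repl_mat a D alpha m v = replace_col M (M *\<^sub>v x) c"
    proof (rule eq_matI)
      fix i j assume "i < dim_row (replace_col M (M *\<^sub>v x) c)" "j < dim_col (replace_col M (M *\<^sub>v x) c)"
      then have ij: "i < r * D" "j < r * D" using M_car by (auto simp: replace_col_def)
      show "repl_mat a D alpha m v $$ (i, j) = replace_col M (M *\<^sub>v x) c $$ (i, j)"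
        using ij M_car unfolding Mx
        by (simp add: repl_mat_def replace_col_def Let_def c_def bv_def M_def r_def)
    qed (use M_car in \<open>auto simp: repl_mat_def replace_col_def Let_def r_def\<close>)
    have "det (repl_mat a D alpha m v) = vec_index x c * det M"
      unfolding R by (rule cramer_lemma_mat[OF M_car x_car c])
    also have "vec_index x c = d m v" using c cdm by (simp add: x_def)
    finally show ?thesis using Delta_nz by (simp add: M_def r_def)
  qed
  show ?thesis
  proof (intro conjI allI ballI impI)
    fix v m assume "v \<in> {1..D}" "m < length a"
    then show "d m v = det (repl_mat a D alpha m v) / det (coeff_mat (length a) D alpha)"
      using part1 by (simp add: M_def r_def)
  next
    fix n v assume nv: "v \<in> {1..D} \<and> v mod D = n mod D"
    have "real (part_count a n) = (\<Sum>m < length a. d m n * real n ^ m)" using d_quasi by simp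
    also have "\<dots> = (\<Sum>m < length a. det (repl_mat a D alpha m v) / det M * real n ^ m)"
    proof (intro sum.cong refl)
      fix m assume m: "m \<in> {..<length a}"
      have "d m n = d m (n mod D)" using per_mod[of "d m" D n] d_per m by auto
      also have "\<dots> = d m v" using per_mod[of "d m" D v] d_per m nv by auto
      also have "\<dots> = det (repl_mat a D alpha m v) / det M" using part1 nv m by (simp add: r_def)
      finally show "d m n * real n ^ m = det (repl_mat a D alpha m v) / det M * real n ^ m" by simp
    qed
    also have "\<dots> = 1 / det (coeff_mat (length a) D alpha) * (\<Sum>m < length a. det (repl_mat a D alpha m v) * real n ^ m)"
      by (simp add: sum_distrib_left M_def r_def)
    finally show "real (part_count a n) = 1 / det (coeff_mat (length a) D alpha) * (\<Sum>m < length a. det (repl_mat a D alpha m v) * real n ^ m)" .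
  qed
qed

end
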